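(* Let $K$ be an alphabet space and $\sigma:K\to K^+$ a primitive generalized substitution. Then for every $a\in K$, $\lim_{n\to\infty}|\sigma^n(a)|=\infty$.
   Context: An alphabet space is a compact zero-dimensional metric space $K$ with at least two points; $K^+$ is the set of nonempty finite words over $K$. A generalized substitution is a map $\sigma:K\to K^+$ with $a\mapsto|\sigma(a)|$ continuous and, for each $j$, $a\mapsto$ ($j$-th letter of $\sigma(a)$) continuous on $\{a:|\sigma(a)|\ge j\}$; it is extended to words by concatenation and iterated. $\sigma$ is primitive if for every nonempty open $V\subset K$ there is $j$ such that for all $a\in K$ and all $k\ge j$ some letter of $\sigma^k(a)$ lies in $V$. *)

theory Defs
  imports "HOL-Analysis.Analysis"
begin

definition zero_dimensional :: "'a::metric_space set \<Rightarrow> bool" where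
  "zero_dimensional K \<longleftrightarrow>
     (\<forall>U x. openin (top_of_set K) U \<and> x \<in> U \<longrightarrow>
        (\<exists>C. openin (top_of_set K) C \<and> closedin (top_of_set K) C \<and> x \<in> C \<and> C \<subseteq> U))"

definition alphabet_space :: "'a::metric_space set \<Rightarrow> bool" where
  "alphabet_space K \<longleftrightarrow> compact K \<and> zero_dimensional K \<and> (\<exists>x\<in>K. \<exists>y\<in>K. x \<noteq> y)"

text \<open>Generalized substitution K -> K^+ (nonempty finite words, as lists);
  the j-th letter is index j (0-based) of the list.\<close>
definition gen_substitution :: "'a::metric_space set \<Rightarrow> ('a \<Rightarrow> 'a list) \<Rightarrow> bool" where
  "gen_substitution K \<sigma> \<longleftrightarrow>
     (\<forall>a\<in>K. \<sigma> a \<noteq> [] \<and> set (\<sigma> a) \<subseteq> K) \<and>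
     continuous_on K (\<lambda>a. length (\<sigma> a)) \<and>
     (\<forall>j. continuous_on {a\<in>K. j < length (\<sigma> a)} (\<lambda>a. \<sigma> a ! j))"

definition subst_word :: "('a \<Rightarrow> 'a list) \<Rightarrow> 'a list \<Rightarrow> 'a list" where
  "subst_word \<sigma> w = concat (map \<sigma> w)"

definition subst_iter :: "('a \<Rightarrow> 'a list) \<Rightarrow> nat \<Rightarrow> 'a \<Rightarrow> 'a list" where
  "subst_iter \<sigma> n a = (subst_word \<sigma> ^^ n) [a]"

definition primitive :: "'a::metric_space set \<Rightarrow> ('a \<Rightarrow> 'a list) \<Rightarrow> bool" where
  "primitive K \<sigma> \<longleftrightarrow>
     (\<forall>V. openin (top_of_set K) V \<and> V \<noteq> {} \<longrightarrow>
        (\<exists>j. \<forall>a\<in>K. \<forall>k\<ge>j. \<exists>x\<in>set (subst_iter \<sigma> k a). x \<in> V))"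

end

theory Submission
  imports Defs
begin

lemma iter_word:
  "(subst_word \<sigma> ^^ k) w = concat (map (subst_iter \<sigma> k) w)"
proof (induction k arbitrary: w)
  case 0
  then show ?case by (simp add: subst_iter_def)
next
  case (Suc k)
  have "(subst_word \<sigma> ^^ Suc k) w = subst_word \<sigma> (concat (map (subst_iter \<sigma> k) w))"
    using Suc by simp
  also have "\<dots> = concat (map (\<lambda>b. subst_word \<sigma> (subst_iter \<sigma> k b)) w)"
    by (induction w) (auto simp: subst_word_def)
  also have "\<dots> = concat (map (subst_iter \<sigma> (Suc k)) w)"
    by (simp add: subst_iter_def[abs_def])
  finally show ?case .
qed

lemma iter_add:
  "subst_iter \<sigma> (j + n) a = concat (map (subst_iter \<sigma> j) (subst_iter \<sigma> n a))"
  by (simp add: subst_iter_def funpow_add iter_word[symmetric])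

lemma iter_set:
  assumes "gen_substitution K \<sigma>" "a \<in> K"
  shows "set (subst_iter \<sigma> n a) \<subseteq> K"
proof (induction n)
  case 0
  then show ?case using assms by (simp add: subst_iter_def)
next
  case (Suc n)
  have "subst_iter \<sigma> (Suc n) a = concat (map \<sigma> (subst_iter \<sigma> n a))"
    by (simp add: subst_iter_def subst_word_def)
  then show ?case using Suc assms(1) unfolding gen_substitution_def by auto
qed

lemma iter_len:
  assumes "gen_substitution K \<sigma>" "a \<in> K"
  shows "1 \<le> length (subst_iter \<sigma> n a)"
proof (induction n)
  case 0
  then show ?case by (simp add: subst_iter_def)
next
  case (Suc n)
  have e: "subst_iter \<sigma> (Suc n) a = concat (map \<sigma> (subst_iter \<sigma> n a))"
    by (simp add: subst_iter_def subst_word_def)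
  obtain b bs where bs: "subst_iter \<sigma> n a = b # bs"
    using Suc by (cases "subst_iter \<sigma> n a") auto
  have "b \<in> K" using iter_set[OF assms, of n] bs by auto
  then have "\<sigma> b \<noteq> []" using assms(1) unfolding gen_substitution_def by auto
  then show ?case unfolding e bs by (cases "\<sigma> b") auto
qed

lemma cl: "2 * length xs = sum_list (map (\<lambda>_. 2::nat) xs)"
  by (induction xs) auto

theorem mainTheorem17:
  fixes K :: "'a::metric_space set" and \<sigma> :: "'a \<Rightarrow> 'a list"
  assumes "alphabet_space K" and "gen_substitution K \<sigma>" and "primitive K \<sigma>"
  shows "\<forall>a\<in>K. filterlim (\<lambda>n. length (subst_iter \<sigma> n a)) at_top sequentially"
proof
  fix a assume aK: "a \<in> K"
  obtain x y where xy: "x \<in> K" "y \<in> K" "x \<noteq> y"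
    using assms(1) unfolding alphabet_space_def by auto
  define d where "d = dist x y / 2"
  have d: "d > 0" using xy by (simp add: d_def)
  define U where "U = K \<inter> ball x d"
  define W where "W = K \<inter> ball y d"
  have UW: "U \<inter> W = {}"
  proof (rule ccontr)
    assume "U \<inter> W \<noteq> {}"
    then obtain z where "dist x z < d" "dist y z < d" unfolding U_def W_def by auto
    then have "dist x y < 2 * d" by (smt (verit) dist_commute dist_triangle)
    then show False by (simp add: d_def)
  qed
  have oU: "openin (top_of_set K) U" "U \<noteq> {}"
    using xy d unfolding U_def by (auto simp: openin_open_Int)
  have oW: "openin (top_of_set K) W" "W \<noteq> {}"
    using xy d unfolding W_def by (auto simp: openin_open_Int)
  obtain j1 where j1: "\<forall>b\<in>K. \<forall>k\<ge>j1. \<exists>z\<in>set (subst_iter \<sigma> k b). z \<in> U"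
    using assms(3) oU unfolding primitive_def by blast
  obtain j2 where j2: "\<forall>b\<in>K. \<forall>k\<ge>j2. \<exists>z\<in>set (subst_iter \<sigma> k b). z \<in> W"
    using assms(3) oW unfolding primitive_def by blast
  define j where "j = max (max j1 j2) 1"
  have j0: "j > 0" by (simp add: j_def)
  have two: "2 \<le> length (subst_iter \<sigma> j b)" if bK: "b \<in> K" for b
  proof -
    obtain u where u: "u \<in> set (subst_iter \<sigma> j b)" "u \<in> U"
      using j1 bK unfolding j_def by (meson max.cobounded1 max.coboundedI1)
    obtain w where w: "w \<in> set (subst_iter \<sigma> j b)" "w \<in> W"
      using j2 bK unfolding j_def by (meson max.cobounded2 max.coboundedI1)
    have "u \<noteq> w" using UW u w by auto
    have "card {u, w} \<le> card (set (subst_iter \<sigma> j b))"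
      using u w by (intro card_mono) auto
    also have "\<dots> \<le> length (subst_iter \<sigma> j b)" by (rule card_length)
    finally show ?thesis using \<open>u \<noteq> w\<close> by simp
  qed
  have dbl: "2 * length (subst_iter \<sigma> n a) \<le> length (subst_iter \<sigma> (j + n) a)" for n
  proof -
    have "2 * length (subst_iter \<sigma> n a) = sum_list (map (\<lambda>_. 2) (subst_iter \<sigma> n a))"
      by (rule cl)
    also have "\<dots> \<le> sum_list (map (\<lambda>b. length (subst_iter \<sigma> j b)) (subst_iter \<sigma> n a))"
      using iter_set[OF assms(2) aK, of n] two by (intro sum_list_mono) auto
    also have "\<dots> = length (subst_iter \<sigma> (j + n) a)"
      by (simp add: iter_add length_concat o_def)
    finally show ?thesis .
  qed
  have grow: "2 ^ m \<le> length (subst_iter \<sigma> (m * j + r) a)" for m r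
  proof (induction m)
    case 0
    then show ?case using iter_len[OF assms(2) aK] by simp
  next
    case (Suc m)
    have "2 ^ Suc m \<le> 2 * length (subst_iter \<sigma> (m * j + r) a)" using Suc by simp
    also have "\<dots> \<le> length (subst_iter \<sigma> (j + (m * j + r)) a)" by (rule dbl)
    finally show ?case by (simp add: add.assoc)
  qed
  show "filterlim (\<lambda>n. length (subst_iter \<sigma> n a)) at_top sequentially"
    unfolding filterlim_at_top
  proof
    fix Z :: nat
    show "eventually (\<lambda>n. Z \<le> length (subst_iter \<sigma> n a)) sequentially"
      unfolding eventually_sequentially
    proof (intro exI allI impI)
      fix n assume n: "Z * j \<le> n"
      have "Z \<le> n div j" using n j0
        by (metis div_le_mono nonzero_mult_div_cancel_right not_gr0)
      have "Z < 2 ^ Z" by (rule less_exp)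
      also have "\<dots> \<le> 2 ^ (n div j)" using \<open>Z \<le> n div j\<close> by (simp add: power_increasing)
      also have "\<dots> \<le> length (subst_iter \<sigma> ((n div j) * j + n mod j) a)" by (rule grow)
      finally show "Z \<le> length (subst_iter \<sigma> n a)" by simp
    qed
  qed
qed

end
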